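(* Let ${\bf Y}$ be a set equipped with functions $d^\pi_Y$ ($Y\in{\bf Y}$) and a constant $\xi>0$ satisfying axioms (1)–(4) below, and let $\mathcal H(X,Z)$ be as defined below. If $(X',Z')\in\mathcal H(X,Z)$ and $Y\in{\bf Y}$ is distinct from $X,Z,X',Z'$, then $$d^\pi_Y(X,Z)-d^\pi_Y(X',Z')<2\xi.$$
   Context: Let ${\bf Y}$ be a set and for each $Y\in{\bf Y}$ let $d^\pi_Y:({\bf Y}\setminus\{Y\})\times({\bf Y}\setminus\{Y\})\to[0,\infty)$ be a function, and let $\xi>0$ be a constant, such that (1) $d^\pi_Y(X,Z)=d^\pi_Y(Z,X)$; (2) $d^\pi_Y(X,Z)+d^\pi_Y(Z,W)\ge d^\pi_Y(X,W)$; (3) for pairwise distinct $X,Y,Z$, $\min\{d^\pi_Y(X,Z),d^\pi_Z(X,Y)\}<\xi$; (4) for all $X,Z\in{\bf Y}$ the set $\{Y: d^\pi_Y(X,Z)\ge\xi\}$ is finite. For $X,Z\in{\bf Y}$, $\mathcal H(X,Z)$ is the set of pairs $(X',Z')\in{\bf Y}\times{\bf Y}$ such that one of the following holds: $d^\pi_X(X',Z')>2\xi$ and $d^\pi_Z(X',Z')>2\xi$; or $X'=X$ and $d^\pi_Z(X,Z')>2\xi$; or $Z'=Z$ and $d^\pi_X(X',Z)>2\xi$; or $(X',Z')=(X,Z)$. *)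

theory Defs
  imports Complex_Main
begin

text \<open>Projection axioms (1)-(4). The function d Y X Z stands for d^pi_Y(X,Z); it is
only meaningful for X, Z in Ys - {Y}, and all axioms are relativised accordingly.\<close>

definition proj_axioms :: "'a set \<Rightarrow> ('a \<Rightarrow> 'a \<Rightarrow> 'a \<Rightarrow> real) \<Rightarrow> real \<Rightarrow> bool" where
  "proj_axioms Ys d \<xi> \<longleftrightarrow> \<xi> > 0 \<and>
     (\<forall>Y\<in>Ys. \<forall>X\<in>Ys - {Y}. \<forall>Z\<in>Ys - {Y}. 0 \<le> d Y X Z) \<and>
     (\<forall>Y\<in>Ys. \<forall>X\<in>Ys - {Y}. \<forall>Z\<in>Ys - {Y}. d Y X Z = d Y Z X) \<and>
     (\<forall>Y\<in>Ys. \<forall>X\<in>Ys - {Y}. \<forall>Z\<in>Ys - {Y}. \<forall>W\<in>Ys - {Y}. d Y X Z + d Y Z W \<ge> d Y X W) \<and>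
     (\<forall>X\<in>Ys. \<forall>Y\<in>Ys. \<forall>Z\<in>Ys. X \<noteq> Y \<and> Y \<noteq> Z \<and> X \<noteq> Z \<longrightarrow> min (d Y X Z) (d Z X Y) < \<xi>) \<and>
     (\<forall>X\<in>Ys. \<forall>Z\<in>Ys. finite {Y \<in> Ys. Y \<noteq> X \<and> Y \<noteq> Z \<and> d Y X Z \<ge> \<xi>})"

text \<open>The set H(X,Z); each clause carries the guards needed for the d-terms to be defined.\<close>

definition Hset :: "'a set \<Rightarrow> ('a \<Rightarrow> 'a \<Rightarrow> 'a \<Rightarrow> real) \<Rightarrow> real \<Rightarrow> 'a \<Rightarrow> 'a \<Rightarrow> ('a \<times> 'a) set" where
  "Hset Ys d \<xi> X Z = {(X', Z'). X' \<in> Ys \<and> Z' \<in> Ys \<and>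
     ((X' \<noteq> X \<and> Z' \<noteq> X \<and> X' \<noteq> Z \<and> Z' \<noteq> Z \<and> d X X' Z' > 2 * \<xi> \<and> d Z X' Z' > 2 * \<xi>) \<or>
      (X' = X \<and> X \<noteq> Z \<and> Z' \<noteq> Z \<and> d Z X Z' > 2 * \<xi>) \<or>
      (Z' = Z \<and> X' \<noteq> X \<and> Z \<noteq> X \<and> d X X' Z > 2 * \<xi>) \<or>
      (X' = X \<and> Z' = Z))}"

end

theory Submission
  imports Defs
begin

lemma key:
  assumes ax: "proj_axioms Ys d \<xi>"
    and "A \<in> Ys" "Y \<in> Ys" "P \<in> Ys" "Q \<in> Ys"
    and "A \<noteq> Y" "P \<noteq> A" "Q \<noteq> A" "P \<noteq> Y" "Q \<noteq> Y"
    and "d A P Q > 2 * \<xi>"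
  shows "d Y A P < \<xi> \<or> d Y A Q < \<xi>"
proof -
  from ax have sym: "\<forall>Y\<in>Ys. \<forall>X\<in>Ys - {Y}. \<forall>Z\<in>Ys - {Y}. d Y X Z = d Y Z X"
    and tri: "\<forall>Y\<in>Ys. \<forall>X\<in>Ys - {Y}. \<forall>Z\<in>Ys - {Y}. \<forall>W\<in>Ys - {Y}. d Y X Z + d Y Z W \<ge> d Y X W"
    and m: "\<forall>X\<in>Ys. \<forall>Y\<in>Ys. \<forall>Z\<in>Ys. X \<noteq> Y \<and> Y \<noteq> Z \<and> X \<noteq> Z \<longrightarrow> min (d Y X Z) (d Z X Y) < \<xi>"
    unfolding proj_axioms_def by auto
  have t: "d A P Y + d A Y Q \<ge> d A P Q" using tri assms by auto
  have s1: "d A Y Q = d A Q Y" "d Y P A = d Y A P" "d Y Q A = d Y A Q" using sym assms by auto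
  have m1: "min (d A P Y) (d Y P A) < \<xi>" using m assms by auto
  have m2: "min (d A Q Y) (d Y Q A) < \<xi>" using m assms by auto
  show ?thesis using t s1 m1 m2 assms(11) by (auto simp: min_def split: if_splits)
qed

theorem proposition2p2:
  fixes Ys :: "'a set" and d :: "'a \<Rightarrow> 'a \<Rightarrow> 'a \<Rightarrow> real" and \<xi> :: real
  assumes "proj_axioms Ys d \<xi>"
    and "X \<in> Ys" and "Z \<in> Ys" and "Y \<in> Ys"
    and "(X', Z') \<in> Hset Ys d \<xi> X Z"
    and "Y \<noteq> X" and "Y \<noteq> Z" and "Y \<noteq> X'" and "Y \<noteq> Z'"
  shows "d Y X Z - d Y X' Z' < 2 * \<xi>"
proof -
  note ax = assms(1)
  from ax have pos: "\<xi> > 0" and nn: "\<forall>Y\<in>Ys. \<forall>X\<in>Ys - {Y}. \<forall>Z\<in>Ys - {Y}. 0 \<le> d Y X Z"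
    and sym: "\<forall>Y\<in>Ys. \<forall>X\<in>Ys - {Y}. \<forall>Z\<in>Ys - {Y}. d Y X Z = d Y Z X"
    and tri: "\<forall>Y\<in>Ys. \<forall>X\<in>Ys - {Y}. \<forall>Z\<in>Ys - {Y}. \<forall>W\<in>Ys - {Y}. d Y X Z + d Y Z W \<ge> d Y X W"
    unfolding proj_axioms_def by auto
  have X'Z': "X' \<in> Ys" "Z' \<in> Ys" using assms(5) unfolding Hset_def by auto
  note all = assms(2-4,6-9) X'Z'
  have n0: "0 \<le> d Y X' Z'" using nn all by auto
  have tXZ: "d Y X Z \<le> d Y X X' + d Y X' Z' + d Y Z' Z"
  proof -
    have "d Y X Z \<le> d Y X X' + d Y X' Z" using tri all by auto
    moreover have "d Y X' Z \<le> d Y X' Z' + d Y Z' Z" using tri all by auto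
    ultimately show ?thesis by linarith
  qed
  have tXZ2: "d Y X Z \<le> d Y X Z' + d Y Z' X' + d Y X' Z"
  proof -
    have "d Y X Z \<le> d Y X Z' + d Y Z' Z" using tri all by auto
    moreover have "d Y Z' Z \<le> d Y Z' X' + d Y X' Z" using tri all by auto
    ultimately show ?thesis by linarith
  qed
  have sy: "d Y Z' X' = d Y X' Z'" "d Y Z' Z = d Y Z Z'" "d Y X' Z = d Y Z X'" "d Y X Z = d Y Z X"
    using sym all by auto
  have nn2: "0 \<le> d Y X X'" "0 \<le> d Y Z' Z" "0 \<le> d Y X Z'" "0 \<le> d Y X' Z" using nn all by auto
  from assms(5) consider
      (a) "X' \<noteq> X" "Z' \<noteq> X" "X' \<noteq> Z" "Z' \<noteq> Z" "d X X' Z' > 2 * \<xi>" "d Z X' Z' > 2 * \<xi>"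
    | (b) "X' = X" "X \<noteq> Z" "Z' \<noteq> Z" "d Z X Z' > 2 * \<xi>"
    | (c) "Z' = Z" "X' \<noteq> X" "Z \<noteq> X" "d X X' Z > 2 * \<xi>"
    | (d) "X' = X" "Z' = Z"
    unfolding Hset_def by auto
  then show ?thesis
  proof cases
    case a
    have k1: "d Y X X' < \<xi> \<or> d Y X Z' < \<xi>" by (rule key[OF ax]) (use a all in auto)
    have k2: "d Y Z X' < \<xi> \<or> d Y Z Z' < \<xi>" by (rule key[OF ax]) (use a all in auto)
    have e1: "d Y X Z \<le> d Y X X' + d Y X' Z" using tri all by auto
    have e2: "d Y X Z \<le> d Y X Z' + d Y Z' Z" using tri all by auto
    from k1 k2 show ?thesis using tXZ tXZ2 sy nn2 n0 e1 e2 by (elim disjE) linarith+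
  next
    case b
    have k2: "d Y Z X < \<xi> \<or> d Y Z Z' < \<xi>" by (rule key[OF ax]) (use b all in auto)
    have "d Y X Z \<le> d Y X Z' + d Y Z' Z" using tri all by auto
    then show ?thesis using k2 b sy nn2 n0 pos by auto
  next
    case c
    have k1: "d Y X X' < \<xi> \<or> d Y X Z < \<xi>" by (rule key[OF ax]) (use c all in auto)
    have "d Y X Z \<le> d Y X X' + d Y X' Z" using tri all by auto
    then show ?thesis using k1 c sy nn2 n0 pos by auto
  next
    case d
    then show ?thesis using pos by auto
  qed
qed

end
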